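(* Let $N_1=(S_1,A,L_1,AP,V_1,\{s_0^1\})$ and $N_2=(S_2,A,L_2,AP,V_2,\{s_0^2\})$ be deterministic APAs in SVNF such that $N_1\not\preceq N_2$, and let $1\le K_1\le K_2$ be integers. Then $d(N_1\setminus^{K_2}N_2,\ N_1\setminus^{K_1}N_2)\le\lambda^{K_1}$, where $d$ is the syntactic distance with discount factor $\lambda$ and $N_1\setminus^KN_2$ is the level-$K$ under-approximating difference, both defined in the context.
   Context: Basic notions. For a finite set $S$, $\mathrm{Dist}(S)$ is the set of probability distributions on $S$; $C(S)$ is a set of constraints, each $\phi\in C(S)$ determining $Sat(\phi)\subseteq\mathrm{Dist}(S)$. An APA is a tuple $N=(S,A,L,AP,V,S_0)$ with finite state set $S$, initial states $S_0\subseteq S$, finite action set $A$, finite set $AP$ of atomic propositions, $L:S\times A\times C(S)\to\{\top,?,\bot\}$ ($\top$: must, $?$: may, $\bot$: no transition) and $V:S\to 2^{2^{AP}}$. An APA is in SVNF if $|V(s)|\le1$ for all $s$; it is deterministic if it has exactly one initial state, for all $s,a$ at most one $\phi$ has $L(s,a,\phi)\ne\bot$, and for all $s,a,\phi$ with $L(s,a,\phi)\ne\bot$ and distinct states $s',s''$ with $V(s')\cap V(s'')\ne\emptyset$ there are no $\mu,\mu'\in Sat(\phi)$ with $\mu(s')>0$ and $\mu'(s'')>0$. For $\mu\in\mathrm{Dist}(S)$, $\mu'\in\mathrm{Dist}(S')$, $\mathcal R\subseteq S\times S'$ and $\delta:S\to(S'\to[0,1])$, $\mu\Subset^\delta_{\mathcal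 R}\mu'$ means $\delta(s)$ is a distribution whenever $\mu(s)>0$, $\sum_s\mu(s)\delta(s)(s')=\mu'(s')$ for all $s'$, and $\delta(s)(s')>0\Rightarrow(s,s')\in\mathcal R$; $\mu\Subset_{\mathcal R}\mu'$ if such $\delta$ exists; $\Subset^\delta$ means $\Subset^\delta_{S\times S'}$. A refinement relation between APAs $N_1,N_2$ is $\mathcal R\subseteq S_1\times S_2$ such that for all $(s_1,s_2)\in\mathcal R$: $V_1(s_1)\subseteq V_2(s_2)$; whenever $L_2(s_2,a,\phi_2)=\top$ there is $\phi_1$ with $L_1(s_1,a,\phi_1)=\top$ and every $\mu_1\in Sat(\phi_1)$ has some $\mu_2\in Sat(\phi_2)$ with $\mu_1\Subset_{\mathcal R}\mu_2$; whenever $L_1(s_1,a,\phi_1)\ne\bot$ there is $\phi_2$ with $L_2(s_2,a,\phi_2)\ne\bot$ and every $\mu_1\in Sat(\phi_1)$ has some $\mu_2\in Sat(\phi_2)$ with $\mu_1\Subset_{\mathcal R}\mu_2$. $N_1\preceq N_2$ if some refinement relation relates each initial state of $N_1$ to some initial state of $N_2$. For $N$ in SVNF, $\mathsf{succ}_{s,a}(v)=\{s'\mid V(s')=\{v\},\ \exists\phi\,\exists\mu\in Sat(\phi):L(s,a,\phi)\ne\bot,\mu(s')>0\}$; for deterministic $N$ this has at most one element, identified with that element (or $\emptyset$); for a state $t$ of another automaton with valuation set $\{v\}$, $\mathsf{succ}_{s,a}(t):=\mathsf{succ}_{s,a}(v)$. Distances: fix $0<\lambda<1$. For APAs $M_1,M_2$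 in SVNF (states $S_1,S_2$, functions $L_1,L_2,V_1,V_2$), $s_1,s_2$ are not compatible if $V_1(s_1)\ne V_2(s_2)$, or some $a,\phi_1$ has $L_1(s_1,a,\phi_1)\ne\bot$ while $L_2(s_2,a,\cdot)\equiv\bot$, or some $a,\phi_2$ has $L_2(s_2,a,\phi_2)=\top$ while $L_1(s_1,a,\phi_1)\ne\top$ for all $\phi_1$. $D(\phi_1,\phi_2,d)=\sup_{\mu_1\in Sat(\phi_1)}\inf_{\mu_2\in Sat(\phi_2)}\inf_{\delta:\mu_1\Subset^\delta\mu_2}\sum_{(s_1,s_2)}\mu_1(s_1)\delta(s_1)(s_2)d(s_1,s_2)$. The state distance $d:S_1\times S_2\to[0,1]$ is the least fixed point of $d(s_1,s_2)=1$ if not compatible, else $d(s_1,s_2)=\max\{\max_{a,\phi_1:L_1(s_1,a,\phi_1)\ne\bot}\min_{\phi_2:L_2(s_2,a,\phi_2)\ne\bot}\lambda D(\phi_1,\phi_2,d),\ \max_{a,\phi_2:L_2(s_2,a,\phi_2)=\top}\min_{\phi_1:L_1(s_1,a,\phi_1)=\top}\lambda D(\phi_1,\phi_2,d)\}$. The syntactic distance is $d(M_1,M_2)=\max_{s\in S_0^1}\min_{s'\in S_0^2}d(s,s')$. Cases for $N_1,N_2$. Let $\mathcal R$ be the maximal refinement relation between $N_1$ and $N_2$. A pair $(s_1,s_2)\in S_1\times S_2$ is in case 1 if $(s_1,s_2)\in\mathcal R$, in case 2 if $V_1(s_1)\ne V_2(s_2)$, in case 3 if $(s_1,s_2)\notin\mathcal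 R$ and $V_1(s_1)=V_2(s_2)$. For $(s_1,s_2)$ in case 3 and $e\in A$: $e\in B_a(s_1,s_2)$ iff some $\phi_1$ has $L_1(s_1,e,\phi_1)=\top$ and $L_2(s_2,e,\cdot)\equiv\bot$; $e\in B_b$ iff some $\phi_1$ has $L_1(s_1,e,\phi_1)=?$ and $L_2(s_2,e,\cdot)\equiv\bot$; $e\in B_c$ iff some $\phi_1$ has $L_1(s_1,e,\phi_1)\in\{?,\top\}$, some $\phi_2$ has $L_2(s_2,e,\phi_2)=?$, and some $\mu\in Sat(\phi_1)$ has $\mu\not\Subset_{\mathcal R}\mu'$ for all $\mu'\in Sat(\phi_2)$; $e\in B_d$ iff some $\phi_2$ has $L_2(s_2,e,\phi_2)=\top$ and $L_1(s_1,e,\cdot)\equiv\bot$; $e\in B_e$ iff some $\phi_2$ has $L_2(s_2,e,\phi_2)=\top$ and some $\phi_1$ has $L_1(s_1,e,\phi_1)=?$; $e\in B_f$ iff some $\phi_2$ has $L_2(s_2,e,\phi_2)=\top$, some $\phi_1$ has $L_1(s_1,e,\phi_1)=\top$, and some $\mu\in Sat(\phi_1)$ has $\mu\not\Subset_{\mathcal R}\mu'$ for all $\mu'\in Sat(\phi_2)$. These sets are empty for pairs not in case 3 and for pairs $(s_1,\bot)$. $B(s_1,s_2)$ is the union of the six (pairwise disjoint) sets. For $e\in B(s_1,s_2)$, $\phi_1$ (resp. $\phi_2$) denotes the unique constraint with $L_1(s_1,e,\phi_1)\ne\bot$ (resp. $L_2(s_2,e,\phi_2)\ne\bot$), when it exists.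 Under-approximation $N_1\setminus^KN_2$ ($K\ge1$). If $V_1(s_0^1)\ne V_2(s_0^2)$ then $N_1\setminus^KN_2:=N_1$. Otherwise $N_1\setminus^KN_2=(S,A,L,AP,V,S_0^K)$ with $S=S_1\times(S_2\cup\{\bot\})\times(A\cup\{\epsilon\})\times\{1,\dots,K\}$, $V(s_1,s_2,e,k)=V_1(s_1)$, $S_0^K=\{(s_0^1,s_0^2,f,K)\mid f\in B(s_0^1,s_0^2)\}$. For $\phi\in C(S_1)$: $\mu\in Sat(\phi^\bot)$ iff $\mu$ is supported on $S_1\times\{\bot\}\times\{\epsilon\}\times\{1\}$ and $s_1\mapsto\mu(s_1,\bot,\epsilon,1)$ is in $Sat(\phi)$. For a state $(s_1,s_2,e,k)$ with $s_2\ne\bot$, $e\ne\epsilon$ and $\phi_1,\phi_2$ with $L_1(s_1,e,\phi_1)\ne\bot\ne L_2(s_2,e,\phi_2)$: $\mu\in Sat(\phi^{B,k}_{12})$ iff (1) $\mu(s_1',s_2',c,k')>0$ implies $c\in B(s_1',s_2')\cup\{\epsilon\}$ and either ($\mathsf{succ}_{s_2,e}(s_1')=\emptyset$, $s_2'=\bot$, $k'=1$) or $s_2'=\mathsf{succ}_{s_2,e}(s_1')$; (2) $s_1'\mapsto\sum_{c,s_2',k'}\mu(s_1',s_2',c,k')$ is in $Sat(\phi_1)$; (3) (a) $\mu(s_1',\bot,c,1)>0$ for some $s_1',c$, or (b) $s_2'\mapsto\sum_{c,\,s_1'\in S_1,\,k'}\mu(s_1',s_2',c,k')$ ($s_2'\in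 S_2$) is not in $Sat(\phi_2)$, or (c) $k\ne1$ and $\mu(s_1',s_2',c,k')>0$ for some $s_1'$, $s_2'\in S_2$, $c\ne\epsilon$, $k'<k$. Transitions of $t=(s_1,s_2,e,k)$: if $s_2=\bot$ or $e=\epsilon$ or $(s_1,s_2)$ is in case 1 or 2, set $L(t,a,\phi^\bot)=L_1(s_1,a,\phi)$ whenever $L_1(s_1,a,\phi)\ne\bot$. Otherwise $(s_1,s_2)$ is in case 3 and (for reachable states) $e\in B(s_1,s_2)$: if $e\in B_a\cup B_b$, set $L(t,a,\phi^\bot)=L_1(s_1,a,\phi)$ for $a\ne e$ with $L_1(s_1,a,\phi)\ne\bot$, and $L(t,e,\phi_1^\bot)=\top$; if $e\in B_d$, set $L(t,a,\phi^\bot)=L_1(s_1,a,\phi)$ for all $a,\phi$ with $L_1(s_1,a,\phi)\ne\bot$; if $e\in B_e$, copy for $a\ne e$ and set $L(t,e,\phi^{B,k}_{12})=?$; if $e\in B_c\cup B_f$, copy for all $a$ (including $e$) and set $L(t,e,\phi^{B,k}_{12})=\top$. All other values of $L$ are $\bot$. *)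

theory Defs
  imports "HOL-Analysis.Analysis" "HOL-Library.Extended_Nonnegative_Real"
begin

text \<open>Modalities: Must = top (must), May = ? (may), No = bot (no transition).\<close>
datatype mtv = Must | May | No

record ('s, 'a, 'p, 'c) apa =
  St   :: "'s set"
  Act  :: "'a set"
  Lab  :: "'s \<Rightarrow> 'a \<Rightarrow> 'c \<Rightarrow> mtv"
  APs  :: "'p set"
  Val  :: "'s \<Rightarrow> 'p set set"
  Init :: "'s set"
  Sat  :: "'c \<Rightarrow> ('s \<Rightarrow> real) set"

definition distr :: "'s set \<Rightarrow> ('s \<Rightarrow> real) \<Rightarrow> bool" where
  "distr S \<mu> \<longleftrightarrow> (\<forall>s\<in>S. 0 \<le> \<mu> s) \<and> (\<forall>s. s \<notin> S \<longrightarrow> \<mu> s = 0) \<and> sum \<mu> S = 1"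

definition wf_apa :: "('s, 'a, 'p, 'c) apa \<Rightarrow> bool" where
  "wf_apa N \<longleftrightarrow> finite (St N) \<and> finite (Act N) \<and> finite (APs N) \<and> Init N \<subseteq> St N
     \<and> (\<forall>s\<in>St N. Val N s \<subseteq> Pow (APs N))
     \<and> (\<forall>s a \<phi>. Lab N s a \<phi> \<noteq> No \<longrightarrow> s \<in> St N \<and> a \<in> Act N \<and> (\<forall>\<mu>\<in>Sat N \<phi>. distr (St N) \<mu>))"

definition svnf :: "('s, 'a, 'p, 'c) apa \<Rightarrow> bool" where
  "svnf N \<longleftrightarrow> (\<forall>s\<in>St N. card (Val N s) \<le> 1)"

definition deterministic :: "('s, 'a, 'p, 'c) apa \<Rightarrow> bool" where
  "deterministic N \<longleftrightarrow> (\<exists>s0. Init N = {s0})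
     \<and> (\<forall>s\<in>St N. \<forall>a\<in>Act N. \<forall>\<phi> \<phi>'. Lab N s a \<phi> \<noteq> No \<and> Lab N s a \<phi>' \<noteq> No \<longrightarrow> \<phi> = \<phi>')
     \<and> (\<forall>s\<in>St N. \<forall>a\<in>Act N. \<forall>\<phi>. Lab N s a \<phi> \<noteq> No \<longrightarrow>
          (\<forall>s'\<in>St N. \<forall>s''\<in>St N. s' \<noteq> s'' \<and> Val N s' \<inter> Val N s'' \<noteq> {} \<longrightarrow>
             \<not> (\<exists>\<mu>\<in>Sat N \<phi>. \<exists>\<mu>'\<in>Sat N \<phi>. \<mu> s' > 0 \<and> \<mu>' s'' > 0)))"

definition corr_by ::
  "'s set \<Rightarrow> 't set \<Rightarrow> ('s \<times> 't) set \<Rightarrow> ('s \<Rightarrow> real) \<Rightarrow> ('t \<Rightarrow> real) \<Rightarrow> ('s \<Rightarrow> 't \<Rightarrow> real) \<Rightarrow> bool"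
  where
  "corr_by S S' R \<mu> \<mu>' \<delta> \<longleftrightarrow>
     (\<forall>s\<in>S. \<forall>s'\<in>S'. 0 \<le> \<delta> s s' \<and> \<delta> s s' \<le> 1)
     \<and> (\<forall>s\<in>S. \<mu> s > 0 \<longrightarrow> distr S' (\<delta> s))
     \<and> (\<forall>s'\<in>S'. (\<Sum>s\<in>S. \<mu> s * \<delta> s s') = \<mu>' s')
     \<and> (\<forall>s\<in>S. \<forall>s'\<in>S'. \<delta> s s' > 0 \<longrightarrow> (s, s') \<in> R)"

definition corr :: "'s set \<Rightarrow> 't set \<Rightarrow> ('s \<times> 't) set \<Rightarrow> ('s \<Rightarrow> real) \<Rightarrow> ('t \<Rightarrow> real) \<Rightarrow> bool" where
  "corr S S' R \<mu> \<mu>' \<longleftrightarrow> (\<exists>\<delta>. corr_by S S' R \<mu> \<mu>' \<delta>)"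

definition refinement_rel ::
  "('s1, 'a, 'p, 'c1) apa \<Rightarrow> ('s2, 'a, 'p, 'c2) apa \<Rightarrow> ('s1 \<times> 's2) set \<Rightarrow> bool" where
  "refinement_rel N1 N2 R \<longleftrightarrow> R \<subseteq> St N1 \<times> St N2 \<and>
     (\<forall>(s1, s2)\<in>R.
        Val N1 s1 \<subseteq> Val N2 s2
      \<and> (\<forall>a \<phi>2. Lab N2 s2 a \<phi>2 = Must \<longrightarrow>
           (\<exists>\<phi>1. Lab N1 s1 a \<phi>1 = Must \<and>
              (\<forall>\<mu>1\<in>Sat N1 \<phi>1. \<exists>\<mu>2\<in>Sat N2 \<phi>2. corr (St N1) (St N2) R \<mu>1 \<mu>2)))
      \<and> (\<forall>a \<phi>1. Lab N1 s1 a \<phi>1 \<noteq> No \<longrightarrow>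
           (\<exists>\<phi>2. Lab N2 s2 a \<phi>2 \<noteq> No \<and>
              (\<forall>\<mu>1\<in>Sat N1 \<phi>1. \<exists>\<mu>2\<in>Sat N2 \<phi>2. corr (St N1) (St N2) R \<mu>1 \<mu>2))))"

definition refines :: "('s1, 'a, 'p, 'c1) apa \<Rightarrow> ('s2, 'a, 'p, 'c2) apa \<Rightarrow> bool" where
  "refines N1 N2 \<longleftrightarrow> (\<exists>R. refinement_rel N1 N2 R \<and> (\<forall>s\<in>Init N1. \<exists>s'\<in>Init N2. (s, s') \<in> R))"

definition maxref :: "('s1, 'a, 'p, 'c1) apa \<Rightarrow> ('s2, 'a, 'p, 'c2) apa \<Rightarrow> ('s1 \<times> 's2) set" where
  "maxref N1 N2 = \<Union>{R. refinement_rel N1 N2 R}"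

definition compatible :: "('s1, 'a, 'p, 'c1) apa \<Rightarrow> ('s2, 'a, 'p, 'c2) apa \<Rightarrow> 's1 \<Rightarrow> 's2 \<Rightarrow> bool" where
  "compatible M1 M2 s1 s2 \<longleftrightarrow> Val M1 s1 = Val M2 s2
     \<and> (\<forall>a \<phi>1. Lab M1 s1 a \<phi>1 \<noteq> No \<longrightarrow> (\<exists>\<phi>2. Lab M2 s2 a \<phi>2 \<noteq> No))
     \<and> (\<forall>a \<phi>2. Lab M2 s2 a \<phi>2 = Must \<longrightarrow> (\<exists>\<phi>1. Lab M1 s1 a \<phi>1 = Must))"

text \<open>D(phi1,phi2,d).  Values live in [0,1]; the infimum is taken in [0,1]
  (hence the extra element 1, which only matters when the set is empty).\<close>
definition Dcon :: "('s1, 'a, 'p, 'c1) apa \<Rightarrow> ('s2, 'a, 'p, 'c2) apa \<Rightarrow> 'c1 \<Rightarrow> 'c2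
    \<Rightarrow> ('s1 \<Rightarrow> 's2 \<Rightarrow> ennreal) \<Rightarrow> ennreal" where
  "Dcon M1 M2 \<phi>1 \<phi>2 d = (SUP \<mu>1\<in>Sat M1 \<phi>1.
      Inf (insert 1 {(\<Sum>(x, y)\<in>St M1 \<times> St M2. ennreal (\<mu>1 x * \<delta> x y) * d x y) | \<mu>2 \<delta>.
               \<mu>2 \<in> Sat M2 \<phi>2 \<and> corr_by (St M1) (St M2) (St M1 \<times> St M2) \<mu>1 \<mu>2 \<delta>}))"

definition dist_op :: "real \<Rightarrow> ('s1, 'a, 'p, 'c1) apa \<Rightarrow> ('s2, 'a, 'p, 'c2) apa
    \<Rightarrow> ('s1 \<Rightarrow> 's2 \<Rightarrow> ennreal) \<Rightarrow> ('s1 \<Rightarrow> 's2 \<Rightarrow> ennreal)" where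
  "dist_op lam M1 M2 d = (\<lambda>s1 s2.
     if \<not> compatible M1 M2 s1 s2 then 1
     else max
       (SUP (a, \<phi>1)\<in>{(a, \<phi>1). Lab M1 s1 a \<phi>1 \<noteq> No}.
          INF \<phi>2\<in>{\<phi>2. Lab M2 s2 a \<phi>2 \<noteq> No}. ennreal lam * Dcon M1 M2 \<phi>1 \<phi>2 d)
       (SUP (a, \<phi>2)\<in>{(a, \<phi>2). Lab M2 s2 a \<phi>2 = Must}.
          INF \<phi>1\<in>{\<phi>1. Lab M1 s1 a \<phi>1 = Must}. ennreal lam * Dcon M1 M2 \<phi>1 \<phi>2 d))"

definition state_dist :: "real \<Rightarrow> ('s1, 'a, 'p, 'c1) apa \<Rightarrow> ('s2, 'a, 'p, 'c2) apa \<Rightarrow> 's1 \<Rightarrow> 's2 \<Rightarrow> ennreal" where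
  "state_dist lam M1 M2 = lfp (dist_op lam M1 M2)"

definition apa_dist :: "real \<Rightarrow> ('s1, 'a, 'p, 'c1) apa \<Rightarrow> ('s2, 'a, 'p, 'c2) apa \<Rightarrow> ennreal" where
  "apa_dist lam M1 M2 = (SUP s\<in>Init M1. INF s'\<in>Init M2. state_dist lam M1 M2 s s')"

definition case3 :: "('s1, 'a, 'p, 'c1) apa \<Rightarrow> ('s2, 'a, 'p, 'c2) apa \<Rightarrow> 's1 \<Rightarrow> 's2 \<Rightarrow> bool" where
  "case3 N1 N2 s1 s2 \<longleftrightarrow> (s1, s2) \<notin> maxref N1 N2 \<and> Val N1 s1 = Val N2 s2"

abbreviation not_corr_all ::
  "('s1, 'a, 'p, 'c1) apa \<Rightarrow> ('s2, 'a, 'p, 'c2) apa \<Rightarrow> 'c1 \<Rightarrow> 'c2 \<Rightarrow> bool" where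
  "not_corr_all N1 N2 \<phi>1 \<phi>2 \<equiv>
     (\<exists>\<mu>\<in>Sat N1 \<phi>1. \<forall>\<mu>'\<in>Sat N2 \<phi>2. \<not> corr (St N1) (St N2) (maxref N1 N2) \<mu> \<mu>')"

definition Ba :: "('s1, 'a, 'p, 'c1) apa \<Rightarrow> ('s2, 'a, 'p, 'c2) apa \<Rightarrow> 's1 \<Rightarrow> 's2 \<Rightarrow> 'a set" where
  "Ba N1 N2 s1 s2 = {e. case3 N1 N2 s1 s2 \<and>
     (\<exists>\<phi>1. Lab N1 s1 e \<phi>1 = Must) \<and> (\<forall>\<phi>2. Lab N2 s2 e \<phi>2 = No)}"

definition Bb :: "('s1, 'a, 'p, 'c1) apa \<Rightarrow> ('s2, 'a, 'p, 'c2) apa \<Rightarrow> 's1 \<Rightarrow> 's2 \<Rightarrow> 'a set" where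
  "Bb N1 N2 s1 s2 = {e. case3 N1 N2 s1 s2 \<and>
     (\<exists>\<phi>1. Lab N1 s1 e \<phi>1 = May) \<and> (\<forall>\<phi>2. Lab N2 s2 e \<phi>2 = No)}"

definition Bc :: "('s1, 'a, 'p, 'c1) apa \<Rightarrow> ('s2, 'a, 'p, 'c2) apa \<Rightarrow> 's1 \<Rightarrow> 's2 \<Rightarrow> 'a set" where
  "Bc N1 N2 s1 s2 = {e. case3 N1 N2 s1 s2 \<and>
     (\<exists>\<phi>1 \<phi>2. Lab N1 s1 e \<phi>1 \<noteq> No \<and> Lab N2 s2 e \<phi>2 = May \<and> not_corr_all N1 N2 \<phi>1 \<phi>2)}"

definition Bd :: "('s1, 'a, 'p, 'c1) apa \<Rightarrow> ('s2, 'a, 'p, 'c2) apa \<Rightarrow> 's1 \<Rightarrow> 's2 \<Rightarrow> 'a set" where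
  "Bd N1 N2 s1 s2 = {e. case3 N1 N2 s1 s2 \<and>
     (\<exists>\<phi>2. Lab N2 s2 e \<phi>2 = Must) \<and> (\<forall>\<phi>1. Lab N1 s1 e \<phi>1 = No)}"

definition Be :: "('s1, 'a, 'p, 'c1) apa \<Rightarrow> ('s2, 'a, 'p, 'c2) apa \<Rightarrow> 's1 \<Rightarrow> 's2 \<Rightarrow> 'a set" where
  "Be N1 N2 s1 s2 = {e. case3 N1 N2 s1 s2 \<and>
     (\<exists>\<phi>2. Lab N2 s2 e \<phi>2 = Must) \<and> (\<exists>\<phi>1. Lab N1 s1 e \<phi>1 = May)}"

definition Bf :: "('s1, 'a, 'p, 'c1) apa \<Rightarrow> ('s2, 'a, 'p, 'c2) apa \<Rightarrow> 's1 \<Rightarrow> 's2 \<Rightarrow> 'a set" where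
  "Bf N1 N2 s1 s2 = {e. case3 N1 N2 s1 s2 \<and>
     (\<exists>\<phi>1 \<phi>2. Lab N1 s1 e \<phi>1 = Must \<and> Lab N2 s2 e \<phi>2 = Must \<and> not_corr_all N1 N2 \<phi>1 \<phi>2)}"

text \<open>B(s1,s2); empty for pairs (s1, bot), represented by None.\<close>
definition Bset :: "('s1, 'a, 'p, 'c1) apa \<Rightarrow> ('s2, 'a, 'p, 'c2) apa \<Rightarrow> 's1 \<Rightarrow> 's2 option \<Rightarrow> 'a set"
  where
  "Bset N1 N2 s1 s2o = (case s2o of None \<Rightarrow> {} | Some s2 \<Rightarrow>
     Ba N1 N2 s1 s2 \<union> Bb N1 N2 s1 s2 \<union> Bc N1 N2 s1 s2 \<union> Bd N1 N2 s1 s2 \<union> Be N1 N2 s1 s2 \<union> Bf N1 N2 s1 s2)"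

definition succ2 :: "('s1, 'a, 'p, 'c1) apa \<Rightarrow> ('s2, 'a, 'p, 'c2) apa \<Rightarrow> 's2 \<Rightarrow> 'a \<Rightarrow> 's1 \<Rightarrow> 's2 set" where
  "succ2 N1 N2 s2 e s1' = {s'. s' \<in> St N2 \<and> Val N2 s' = Val N1 s1' \<and>
      (\<exists>\<phi> \<mu>. Lab N2 s2 e \<phi> \<noteq> No \<and> \<mu> \<in> Sat N2 \<phi> \<and> \<mu> s' > 0)}"

text \<open>States of the difference: (s1, s2 or bot=None, e or epsilon=None, k).
  Constraints: DBot phi is phi^bot, DB s2 e phi1 phi2 k is phi^{B,k}_{12} built
  at a state with second component s2 and third component e.\<close>
type_synonym ('s1, 's2, 'a) dstate = "'s1 \<times> 's2 option \<times> 'a option \<times> nat"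

datatype ('c1, 'c2, 's2, 'a) dcon = DBot 'c1 | DB 's2 'a 'c1 'c2 nat

definition diff_states :: "('s1, 'a, 'p, 'c1) apa \<Rightarrow> ('s2, 'a, 'p, 'c2) apa \<Rightarrow> nat \<Rightarrow> ('s1, 's2, 'a) dstate set" where
  "diff_states N1 N2 K = St N1 \<times> insert None (Some ` St N2) \<times> insert None (Some ` Act N1) \<times> {1..K}"

definition diff_sat :: "('s1, 'a, 'p, 'c1) apa \<Rightarrow> ('s2, 'a, 'p, 'c2) apa \<Rightarrow> ('s1, 's2, 'a) dstate set
    \<Rightarrow> ('c1, 'c2, 's2, 'a) dcon \<Rightarrow> (('s1, 's2, 'a) dstate \<Rightarrow> real) set" where
  "diff_sat N1 N2 S c = (case c of
     DBot \<phi> \<Rightarrow> {\<mu>. distr S \<mu> \<and> (\<forall>t. \<mu> t > 0 \<longrightarrow> (\<exists>s1. t = (s1, None, None, 1)))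
                  \<and> (\<lambda>s1. \<mu> (s1, None, None, 1)) \<in> Sat N1 \<phi>}
   | DB s2 e \<phi>1 \<phi>2 k \<Rightarrow> {\<mu>. distr S \<mu>
       \<and> (\<forall>s1' s2' c k'. \<mu> (s1', s2', c, k') > 0 \<longrightarrow>
            c \<in> insert None (Some ` Bset N1 N2 s1' s2') \<and>
            ((succ2 N1 N2 s2 e s1' = {} \<and> s2' = None \<and> k' = 1) \<or> s2' \<in> Some ` succ2 N1 N2 s2 e s1'))
       \<and> (\<lambda>s1'. \<Sum>t\<in>{t\<in>S. fst t = s1'}. \<mu> t) \<in> Sat N1 \<phi>1
       \<and> ((\<exists>s1' c. \<mu> (s1', None, c, 1) > 0)
          \<or> (\<lambda>s2'. \<Sum>t\<in>{t\<in>S. fst (snd t) = Some s2'}. \<mu> t) \<notin> Sat N2 \<phi>2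
          \<or> (k \<noteq> 1 \<and> (\<exists>s1' s2' c k'. \<mu> (s1', Some s2', Some c, k') > 0 \<and> k' < k)))})"

definition diff_lab :: "('s1, 'a, 'p, 'c1) apa \<Rightarrow> ('s2, 'a, 'p, 'c2) apa \<Rightarrow> ('s1, 's2, 'a) dstate set
    \<Rightarrow> ('s1, 's2, 'a) dstate \<Rightarrow> 'a \<Rightarrow> ('c1, 'c2, 's2, 'a) dcon \<Rightarrow> mtv" where
  "diff_lab N1 N2 S t a c = (case t of (s1, s2o, eo, k) \<Rightarrow>
     let copy = (case c of DBot \<phi> \<Rightarrow> Lab N1 s1 a \<phi> | DB _ _ _ _ _ \<Rightarrow> No) in
     if t \<notin> S then No else
     (case (s2o, eo) of
        (Some s2, Some e) \<Rightarrow>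
          if (s1, s2) \<in> maxref N1 N2 \<or> Val N1 s1 \<noteq> Val N2 s2 then copy
          else
            let newc = (case c of DBot _ \<Rightarrow> False
                          | DB s2' e' \<phi>1 \<phi>2 k' \<Rightarrow> a = e \<and> s2' = s2 \<and> e' = e \<and> k' = k
                               \<and> Lab N1 s1 e \<phi>1 \<noteq> No \<and> Lab N2 s2 e \<phi>2 \<noteq> No) in
            if e \<in> Ba N1 N2 s1 s2 \<union> Bb N1 N2 s1 s2 then
              (if a \<noteq> e then copy
               else (case c of DBot \<phi> \<Rightarrow> if Lab N1 s1 e \<phi> \<noteq> No then Must else No | DB _ _ _ _ _ \<Rightarrow> No))
            else if e \<in> Bd N1 N2 s1 s2 then copy
            else if e \<in> Be N1 N2 s1 s2 then
              (if a \<noteq> e then copy else if newc then May else No)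
            else if e \<in> Bc N1 N2 s1 s2 \<union> Bf N1 N2 s1 s2 then
              (if newc then Must else copy)
            else No
      | _ \<Rightarrow> copy))"

definition diff_gen :: "('s1, 'a, 'p, 'c1) apa \<Rightarrow> ('s2, 'a, 'p, 'c2) apa \<Rightarrow> ('s1, 's2, 'a) dstate set
    \<Rightarrow> ('s1, 's2, 'a) dstate set \<Rightarrow> (('s1, 's2, 'a) dstate, 'a, 'p, ('c1, 'c2, 's2, 'a) dcon) apa" where
  "diff_gen N1 N2 S I = \<lparr> St = S, Act = Act N1, Lab = diff_lab N1 N2 S, APs = APs N1,
      Val = (\<lambda>t. Val N1 (fst t)), Init = I, Sat = diff_sat N1 N2 S \<rparr>"

text \<open>If the initial valuations
  differ, the result is N1, represented by its isomorphic copy on the states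
  (s1, bot, epsilon, 1) with constraints phi^bot.\<close>
definition apa_diff :: "('s1, 'a, 'p, 'c1) apa \<Rightarrow> ('s2, 'a, 'p, 'c2) apa \<Rightarrow> nat
    \<Rightarrow> (('s1, 's2, 'a) dstate, 'a, 'p, ('c1, 'c2, 's2, 'a) dcon) apa" where
  "apa_diff N1 N2 K = (let s01 = the_elem (Init N1); s02 = the_elem (Init N2) in
     if Val N1 s01 \<noteq> Val N2 s02
     then diff_gen N1 N2 (St N1 \<times> {None} \<times> {None} \<times> {1}) {(s01, None, None, 1)}
     else diff_gen N1 N2 (diff_states N1 N2 K)
            {(s01, Some s02, Some f, K) | f. f \<in> Bset N1 N2 s01 (Some s02)})"

end

theory Submission
  imports Defs
begin

lemma distr_nonneg: "distr S \<mu> \<Longrightarrow> 0 \<le> \<mu> x"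
  unfolding distr_def by (cases "x \<in> S") auto

lemma distr_pos_in: "distr S \<mu> \<Longrightarrow> \<mu> x > 0 \<Longrightarrow> x \<in> S"
  unfolding distr_def by force

locale pushf =
  fixes S1 :: "'x set" and S2 :: "'y set" and \<mu>1 :: "'x \<Rightarrow> real" and h :: "'x \<Rightarrow> 'y"
  assumes fin1: "finite S1" and fin2: "finite S2" and d1: "distr S1 \<mu>1"
    and hS: "\<And>x. x \<in> S1 \<Longrightarrow> \<mu>1 x > 0 \<Longrightarrow> h x \<in> S2"
begin

definition "\<delta> = (\<lambda>x y. if y = h x then (1::real) else 0)"
definition "\<mu>2 = (\<lambda>y. \<Sum>x\<in>S1. \<mu>1 x * \<delta> x y)"

lemma nn: "0 \<le> \<mu>1 x" using d1 by (rule distr_nonneg)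

lemma marg:
  assumes f: "\<And>x. x \<in> S1 \<Longrightarrow> \<mu>1 x > 0 \<Longrightarrow> g (h x) = f x"
  shows "(\<Sum>y\<in>{y\<in>S2. g y = v}. \<mu>2 y) = (\<Sum>x\<in>{x\<in>S1. f x = v}. \<mu>1 x)"
proof -
  have "(\<Sum>y\<in>{y\<in>S2. g y = v}. \<mu>2 y) = (\<Sum>x\<in>S1. \<Sum>y\<in>{y\<in>S2. g y = v}. \<mu>1 x * \<delta> x y)"
    unfolding \<mu>2_def by (rule sum.swap)
  also have "\<dots> = (\<Sum>x\<in>S1. if f x = v then \<mu>1 x else 0)"
  proof (rule sum.cong[OF refl])
    fix x assume x: "x \<in> S1"
    have "(\<Sum>y\<in>{y\<in>S2. g y = v}. \<mu>1 x * \<delta> x y) = (\<Sum>y\<in>{y\<in>S2. g y = v}. if y = h x then \<mu>1 x else 0)"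
      by (rule sum.cong) (auto simp: \<delta>_def)
    also have "\<dots> = (if h x \<in> {y\<in>S2. g y = v} then \<mu>1 x else 0)"
      using sum.delta'[of "{y\<in>S2. g y = v}" "h x" "\<lambda>_. \<mu>1 x"] fin2 by (simp add: eq_commute)
    also have "\<dots> = (if f x = v then \<mu>1 x else 0)"
    proof (cases "\<mu>1 x > 0")
      case True then show ?thesis using hS[OF x True] f[OF x True] by auto
    next
      case False then have "\<mu>1 x = 0" using nn[of x] by auto
      then show ?thesis by simp
    qed
    finally show "(\<Sum>y\<in>{y\<in>S2. g y = v}. \<mu>1 x * \<delta> x y) = (if f x = v then \<mu>1 x else 0)" .
  qed
  also have "\<dots> = (\<Sum>x\<in>{x\<in>S1. f x = v}. \<mu>1 x)"
    by (simp add: sum.inter_filter[OF fin1])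
  finally show ?thesis .
qed

lemma sum2: "sum \<mu>2 S2 = 1"
proof -
  have "(\<Sum>y\<in>{y\<in>S2. (\<lambda>_. True) y = True}. \<mu>2 y) = (\<Sum>x\<in>{x\<in>S1. (\<lambda>_. True) x = True}. \<mu>1 x)"
    by (rule marg[where g="\<lambda>_. True"]) auto
  then show ?thesis using d1 by (simp add: distr_def)
qed

lemma mu2_nn: "0 \<le> \<mu>2 y"
  unfolding \<mu>2_def \<delta>_def by (rule sum_nonneg) (simp add: nn)

lemma mu2_pos: "\<mu>2 y > 0 \<Longrightarrow> \<exists>x\<in>S1. \<mu>1 x > 0 \<and> h x = y"
proof (rule ccontr)
  assume "\<mu>2 y > 0" "\<not> (\<exists>x\<in>S1. \<mu>1 x > 0 \<and> h x = y)"
  then have "\<forall>x\<in>S1. \<mu>1 x * \<delta> x y = 0" using nn unfolding \<delta>_def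
    by (metis less_eq_real_def mult_cancel_right1 mult_not_zero)
  then have "\<mu>2 y = 0" unfolding \<mu>2_def by (intro sum.neutral) auto
  with \<open>\<mu>2 y > 0\<close> show False by simp
qed

lemma mu2_ge: "x \<in> S1 \<Longrightarrow> \<mu>1 x \<le> \<mu>2 (h x)"
proof -
  assume x: "x \<in> S1"
  have "\<mu>1 x * \<delta> x (h x) \<le> \<mu>2 (h x)" unfolding \<mu>2_def
    by (rule member_le_sum[OF x]) (auto simp: \<delta>_def nn fin1)
  then show ?thesis by (simp add: \<delta>_def)
qed

lemma distr2: "distr S2 \<mu>2"
proof -
  have "\<mu>2 y = 0" if "y \<notin> S2" for y
    using mu2_pos[of y] mu2_nn[of y] hS that by force
  then show ?thesis unfolding distr_def using sum2 mu2_nn by auto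
qed

lemma corr2: "corr_by S1 S2 (S1 \<times> S2) \<mu>1 \<mu>2 \<delta>"
  unfolding corr_by_def
proof (intro conjI ballI impI)
  fix s assume s: "s \<in> S1" "0 < \<mu>1 s"
  show "distr S2 (\<delta> s)" unfolding distr_def \<delta>_def using hS[OF s] fin2
    by (auto simp: sum.delta')
qed (auto simp: \<delta>_def \<mu>2_def)

lemma cost:
  fixes D :: "'x \<Rightarrow> 'y \<Rightarrow> ennreal"
  assumes "\<And>x. x \<in> S1 \<Longrightarrow> \<mu>1 x > 0 \<Longrightarrow> D x (h x) \<le> B"
  shows "(\<Sum>(x, y)\<in>S1 \<times> S2. ennreal (\<mu>1 x * \<delta> x y) * D x y) \<le> B"
proof -
  have "(\<Sum>(x, y)\<in>S1 \<times> S2. ennreal (\<mu>1 x * \<delta> x y) * D x y)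
      = (\<Sum>x\<in>S1. \<Sum>y\<in>S2. ennreal (\<mu>1 x * \<delta> x y) * D x y)"
    by (rule sum.cartesian_product[symmetric])
  also have "\<dots> \<le> (\<Sum>x\<in>S1. ennreal (\<mu>1 x) * B)"
  proof (rule sum_mono)
    fix x assume x: "x \<in> S1"
    show "(\<Sum>y\<in>S2. ennreal (\<mu>1 x * \<delta> x y) * D x y) \<le> ennreal (\<mu>1 x) * B"
    proof (cases "\<mu>1 x > 0")
      case False then have "\<mu>1 x = 0" using nn[of x] by auto
      then show ?thesis by simp
    next
      case True
      have "(\<Sum>y\<in>S2. ennreal (\<mu>1 x * \<delta> x y) * D x y) = (\<Sum>y\<in>S2. if y = h x then ennreal (\<mu>1 x) * D x y else 0)"
        by (rule sum.cong) (auto simp: \<delta>_def)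
      also have "\<dots> = ennreal (\<mu>1 x) * D x (h x)" using hS[OF x True] fin2 by (simp add: sum.delta')
      also have "\<dots> \<le> ennreal (\<mu>1 x) * B" using assms[OF x True] by (rule mult_left_mono) simp
      finally show ?thesis .
    qed
  qed
  also have "\<dots> = ennreal (sum \<mu>1 S1) * B"
    by (simp add: sum_distrib_right[symmetric] sum_ennreal nn)
  also have "\<dots> = B" using d1 by (simp add: distr_def)
  finally show ?thesis .
qed

end



lemma Dcon_le1: "Dcon M1 M2 \<phi>1 \<phi>2 d \<le> 1"
  unfolding Dcon_def by (rule SUP_least) (rule Inf_lower, simp)

lemma Dcon_leI:
  assumes "\<And>\<mu>1. \<mu>1 \<in> Sat M1 \<phi>1 \<Longrightarrow> \<exists>\<mu>2 \<delta>. \<mu>2 \<in> Sat M2 \<phi>2 \<and> corr_by (St M1) (St M2) (St M1 \<times> St M2) \<mu>1 \<mu>2 \<delta>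
      \<and> (\<Sum>(x, y)\<in>St M1 \<times> St M2. ennreal (\<mu>1 x * \<delta> x y) * d x y) \<le> B"
  shows "Dcon M1 M2 \<phi>1 \<phi>2 d \<le> B"
  unfolding Dcon_def
proof (rule SUP_least)
  fix \<mu>1 assume "\<mu>1 \<in> Sat M1 \<phi>1"
  from assms[OF this] obtain \<mu>2 \<delta> where h: "\<mu>2 \<in> Sat M2 \<phi>2" "corr_by (St M1) (St M2) (St M1 \<times> St M2) \<mu>1 \<mu>2 \<delta>"
     "(\<Sum>(x, y)\<in>St M1 \<times> St M2. ennreal (\<mu>1 x * \<delta> x y) * d x y) \<le> B" by blast
  show "Inf (insert 1 {(\<Sum>(x, y)\<in>St M1 \<times> St M2. ennreal (\<mu>1 x * \<delta> x y) * d x y) | \<mu>2 \<delta>.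
               \<mu>2 \<in> Sat M2 \<phi>2 \<and> corr_by (St M1) (St M2) (St M1 \<times> St M2) \<mu>1 \<mu>2 \<delta>}) \<le> B"
    by (rule Inf_lower2[OF _ h(3)]) (use h in blast)
qed

lemma dist_op_le1:
  assumes "0 \<le> lam" "lam \<le> 1"
  shows "dist_op lam M1 M2 d s1 s2 \<le> 1"
proof -
  have A: "ennreal lam * Dcon M1 M2 \<phi>1 \<phi>2 d \<le> 1" for \<phi>1 \<phi>2
  proof -
    have "ennreal lam * Dcon M1 M2 \<phi>1 \<phi>2 d \<le> 1 * 1"
      by (rule mult_mono) (use assms Dcon_le1 in \<open>auto simp: ennreal_le_1\<close>)
    then show ?thesis by simp
  qed
  show ?thesis
  proof (cases "compatible M1 M2 s1 s2")
    case False then show ?thesis by (simp add: dist_op_def)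
  next
    case True
    have 1: "(SUP (a, \<phi>1)\<in>{(a, \<phi>1). Lab M1 s1 a \<phi>1 \<noteq> No}.
          INF \<phi>2\<in>{\<phi>2. Lab M2 s2 a \<phi>2 \<noteq> No}. ennreal lam * Dcon M1 M2 \<phi>1 \<phi>2 d) \<le> 1"
    proof (rule SUP_least, clarify)
      fix a \<phi>1 assume "Lab M1 s1 a \<phi>1 \<noteq> No"
      then obtain \<phi>2 where "Lab M2 s2 a \<phi>2 \<noteq> No" using True unfolding compatible_def by blast
      then show "(INF \<phi>2\<in>{\<phi>2. Lab M2 s2 a \<phi>2 \<noteq> No}. ennreal lam * Dcon M1 M2 \<phi>1 \<phi>2 d) \<le> 1"
        using A by (intro INF_lower2) auto
    qed
    have 2: "(SUP (a, \<phi>2)\<in>{(a, \<phi>2). Lab M2 s2 a \<phi>2 = Must}.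
          INF \<phi>1\<in>{\<phi>1. Lab M1 s1 a \<phi>1 = Must}. ennreal lam * Dcon M1 M2 \<phi>1 \<phi>2 d) \<le> 1"
    proof (rule SUP_least, clarify)
      fix a \<phi>2 assume "Lab M2 s2 a \<phi>2 = Must"
      then obtain \<phi>1 where "Lab M1 s1 a \<phi>1 = Must" using True unfolding compatible_def by blast
      then show "(INF \<phi>1\<in>{\<phi>1. Lab M1 s1 a \<phi>1 = Must}. ennreal lam * Dcon M1 M2 \<phi>1 \<phi>2 d) \<le> 1"
        using A by (intro INF_lower2) auto
    qed
    show ?thesis using 1 2 True by (simp add: dist_op_def)
  qed
qed

lemma dist_op_leI:
  assumes V: "Val M1 s1 = Val M2 s2"
    and F: "\<And>a \<phi>1. Lab M1 s1 a \<phi>1 \<noteq> No \<Longrightarrow> \<exists>\<phi>2. Lab M2 s2 a \<phi>2 \<noteq> No \<and> ennreal lam * Dcon M1 M2 \<phi>1 \<phi>2 d \<le> B"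
    and G: "\<And>a \<phi>2. Lab M2 s2 a \<phi>2 = Must \<Longrightarrow> \<exists>\<phi>1. Lab M1 s1 a \<phi>1 = Must \<and> ennreal lam * Dcon M1 M2 \<phi>1 \<phi>2 d \<le> B"
  shows "dist_op lam M1 M2 d s1 s2 \<le> B"
proof -
  have C: "compatible M1 M2 s1 s2" unfolding compatible_def using V F G by metis
  have 1: "(SUP (a, \<phi>1)\<in>{(a, \<phi>1). Lab M1 s1 a \<phi>1 \<noteq> No}.
        INF \<phi>2\<in>{\<phi>2. Lab M2 s2 a \<phi>2 \<noteq> No}. ennreal lam * Dcon M1 M2 \<phi>1 \<phi>2 d) \<le> B"
  proof (rule SUP_least, clarify)
    fix a \<phi>1 assume "Lab M1 s1 a \<phi>1 \<noteq> No"
    then obtain \<phi>2 where "Lab M2 s2 a \<phi>2 \<noteq> No" "ennreal lam * Dcon M1 M2 \<phi>1 \<phi>2 d \<le> B" using F by blast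
    then show "(INF \<phi>2\<in>{\<phi>2. Lab M2 s2 a \<phi>2 \<noteq> No}. ennreal lam * Dcon M1 M2 \<phi>1 \<phi>2 d) \<le> B"
      by (intro INF_lower2) auto
  qed
  have 2: "(SUP (a, \<phi>2)\<in>{(a, \<phi>2). Lab M2 s2 a \<phi>2 = Must}.
        INF \<phi>1\<in>{\<phi>1. Lab M1 s1 a \<phi>1 = Must}. ennreal lam * Dcon M1 M2 \<phi>1 \<phi>2 d) \<le> B"
  proof (rule SUP_least, clarify)
    fix a \<phi>2 assume "Lab M2 s2 a \<phi>2 = Must"
    then obtain \<phi>1 where "Lab M1 s1 a \<phi>1 = Must" "ennreal lam * Dcon M1 M2 \<phi>1 \<phi>2 d \<le> B" using G by blast
    then show "(INF \<phi>1\<in>{\<phi>1. Lab M1 s1 a \<phi>1 = Must}. ennreal lam * Dcon M1 M2 \<phi>1 \<phi>2 d) \<le> B"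
      by (intro INF_lower2) auto
  qed
  show ?thesis using 1 2 C by (simp add: dist_op_def)
qed



lemma L1: "(s1,s2o,eo,a) \<in> S \<Longrightarrow> (s1,s2o,eo,b) \<in> S' \<Longrightarrow>
  diff_lab N1 N2 S (s1,s2o,eo,a) act (DBot \<phi>) = diff_lab N1 N2 S' (s1,s2o,eo,b) act (DBot \<phi>)"
  unfolding diff_lab_def Let_def by (auto split: option.splits)

lemma L2: "(s1,s2o,eo,a) \<in> S \<Longrightarrow> (s1,s2o,eo,b) \<in> S' \<Longrightarrow>
  diff_lab N1 N2 S (s1,s2o,eo,a) act (DB x y p q a) = diff_lab N1 N2 S' (s1,s2o,eo,b) act (DB x y p q b)"
  unfolding diff_lab_def Let_def by (auto split: option.splits)

lemma L4: "diff_lab N1 N2 S (s1,s2o,eo,a) act (DB x y p q k) \<noteq> No \<Longrightarrow> s2o = Some x \<and> eo = Some y \<and> k = a"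
  unfolding diff_lab_def Let_def by (auto split: option.splits if_splits)



lemma P1:
  fixes D :: "('s1,'s2,'a) dstate \<Rightarrow> ('s1,'s2,'a) dstate \<Rightarrow> ennreal"
  assumes f1: "finite S1" and f2: "finite S2"
    and nS2: "\<And>s. s \<in> St N1 \<Longrightarrow> (s, None, None, 1) \<in> S2"
    and S1f: "\<And>x. x \<in> S1 \<Longrightarrow> fst x \<in> St N1"
    and D0: "\<And>s. (s, None, None, 1) \<in> S1 \<Longrightarrow> (s, None, None, 1) \<in> S2 \<Longrightarrow> D (s, None, None, 1) (s, None, None, 1) = 0"
  shows "Dcon (diff_gen N1 N2 S1 I1) (diff_gen N1 N2 S2 I2) (DBot \<phi>) (DBot \<phi>) D \<le> 0"
proof (rule Dcon_leI)
  fix \<mu>1 assume "\<mu>1 \<in> Sat (diff_gen N1 N2 S1 I1) (DBot \<phi>)"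
  then have m: "distr S1 \<mu>1" "\<And>t. \<mu>1 t > 0 \<Longrightarrow> \<exists>s1. t = (s1, None, None, 1)"
      "(\<lambda>s1. \<mu>1 (s1, None, None, 1)) \<in> Sat N1 \<phi>"
    by (auto simp: diff_gen_def diff_sat_def)
  have hS: "x \<in> S1 \<Longrightarrow> \<mu>1 x > 0 \<Longrightarrow> id x \<in> S2" for x
    using m(2)[of x] S1f[of x] nS2 by auto
  interpret pushf S1 S2 \<mu>1 id using f1 f2 m(1) hS by unfold_locales auto
  have e: "\<mu>2 = \<mu>1"
  proof
    fix y
    have "\<mu>2 y = (\<Sum>x\<in>S1. if x = y then \<mu>1 x else 0)" unfolding \<mu>2_def \<delta>_def
      by (rule sum.cong) auto
    also have "\<dots> = (if y \<in> S1 then \<mu>1 y else 0)" using f1 by (simp add: sum.delta)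
    also have "\<dots> = \<mu>1 y" using m(1) unfolding distr_def by (cases y) auto
    finally show "\<mu>2 y = \<mu>1 y" .
  qed
  have "\<mu>1 \<in> Sat (diff_gen N1 N2 S2 I2) (DBot \<phi>)"
    using distr2 m(2,3) e by (auto simp: diff_gen_def diff_sat_def)
  moreover have "corr_by (St (diff_gen N1 N2 S1 I1)) (St (diff_gen N1 N2 S2 I2))
     (St (diff_gen N1 N2 S1 I1) \<times> St (diff_gen N1 N2 S2 I2)) \<mu>1 \<mu>1 \<delta>"
    using corr2 e by (simp add: diff_gen_def)
  moreover have "(\<Sum>(x, y)\<in>St (diff_gen N1 N2 S1 I1) \<times> St (diff_gen N1 N2 S2 I2). ennreal (\<mu>1 x * \<delta> x y) * D x y) \<le> 0"
  proof -
    have "(\<Sum>(x, y)\<in>S1 \<times> S2. ennreal (\<mu>1 x * \<delta> x y) * D x y) \<le> 0"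
    proof (rule cost)
      fix x assume x: "x \<in> S1" "\<mu>1 x > 0"
      then obtain s where "x = (s, None, None, 1)" using m(2) by blast
      then show "D x (id x) \<le> 0" using D0 hS x by auto
    qed
    then show ?thesis by (simp add: diff_gen_def)
  qed
  ultimately show "\<exists>\<mu>2 \<delta>. \<mu>2 \<in> Sat (diff_gen N1 N2 S2 I2) (DBot \<phi>) \<and>
      corr_by (St (diff_gen N1 N2 S1 I1)) (St (diff_gen N1 N2 S2 I2)) (St (diff_gen N1 N2 S1 I1) \<times> St (diff_gen N1 N2 S2 I2)) \<mu>1 \<mu>2 \<delta> \<and>
      (\<Sum>(x, y)\<in>St (diff_gen N1 N2 S1 I1) \<times> St (diff_gen N1 N2 S2 I2). ennreal (\<mu>1 x * \<delta> x y) * D x y) \<le> 0"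
    by blast
qed



definition hmap :: "(nat \<Rightarrow> nat) \<Rightarrow> ('s1,'s2,'a) dstate \<Rightarrow> ('s1,'s2,'a) dstate" where
  "hmap g t = (fst t, fst (snd t), fst (snd (snd t)), if fst (snd t) = None then 1 else g (snd (snd (snd t))))"

lemma hmap_simp[simp]: "hmap g (s, s2o, c, k) = (s, s2o, c, if s2o = None then 1 else g k)"
  by (simp add: hmap_def)

lemma P2:
  fixes D :: "('s1,'s2,'a) dstate \<Rightarrow> ('s1,'s2,'a) dstate \<Rightarrow> ennreal"
    and N1 :: "('s1, 'a, 'p, 'c1) apa" and N2 :: "('s2, 'a, 'p, 'c2) apa"
  assumes fin: "finite (St N1)" "finite (St N2)" "finite (Act N1)"
    and S1: "S1 = diff_states N1 N2 K2" and S2: "S2 = diff_states N1 N2 K1"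
    and gr: "\<And>k. 1 \<le> k \<Longrightarrow> k \<le> K2 \<Longrightarrow> 1 \<le> g k \<and> g k \<le> K1"
    and g3: "\<And>k'. 1 \<le> k' \<Longrightarrow> k' < a \<Longrightarrow> a \<noteq> 1 \<Longrightarrow> b \<noteq> 1 \<and> g k' < b"
    and Dc: "\<And>x. x \<in> S1 \<Longrightarrow> D x (hmap g x) \<le> B"
    and K1: "1 \<le> K1"
  shows "Dcon (diff_gen N1 N2 S1 I1) (diff_gen N1 N2 S2 I2) (DB x y p q a) (DB x y p q b) D \<le> B"
proof (rule Dcon_leI)
  have f1: "finite S1" and f2: "finite S2" using fin unfolding S1 S2 diff_states_def by auto
  fix \<mu>1 assume "\<mu>1 \<in> Sat (diff_gen N1 N2 S1 I1) (DB x y p q a)"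
  then have m: "distr S1 \<mu>1"
    "\<And>s1' s2' c k'. \<mu>1 (s1', s2', c, k') > 0 \<Longrightarrow>
            c \<in> insert None (Some ` Bset N1 N2 s1' s2') \<and>
            ((succ2 N1 N2 x y s1' = {} \<and> s2' = None \<and> k' = 1) \<or> s2' \<in> Some ` succ2 N1 N2 x y s1')"
    "(\<lambda>s1'. \<Sum>t\<in>{t\<in>S1. fst t = s1'}. \<mu>1 t) \<in> Sat N1 p"
    "(\<exists>s1' c. \<mu>1 (s1', None, c, 1) > 0)
          \<or> (\<lambda>s2'. \<Sum>t\<in>{t\<in>S1. fst (snd t) = Some s2'}. \<mu>1 t) \<notin> Sat N2 q
          \<or> (a \<noteq> 1 \<and> (\<exists>s1' s2' c k'. \<mu>1 (s1', Some s2', Some c, k') > 0 \<and> k' < a))"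
    by (auto simp: diff_gen_def diff_sat_def)
  have hS: "z \<in> S1 \<Longrightarrow> hmap g z \<in> S2" for z
    using gr K1 unfolding S1 S2 diff_states_def by (cases z) auto
  interpret pushf S1 S2 \<mu>1 "hmap g" using f1 f2 m(1) hS by unfold_locales auto
  have sup: "z \<in> S1 \<and> 1 \<le> snd (snd (snd z))" if "\<mu>1 z > 0" for z
    using distr_pos_in[OF m(1) that] unfolding S1 diff_states_def by auto
  have M1: "(\<lambda>s1'. \<Sum>t\<in>{t\<in>S2. fst t = s1'}. \<mu>2 t) = (\<lambda>s1'. \<Sum>t\<in>{t\<in>S1. fst t = s1'}. \<mu>1 t)"
    by (rule ext, rule marg) (simp add: hmap_def)
  have M2: "(\<lambda>s2'. \<Sum>t\<in>{t\<in>S2. fst (snd t) = Some s2'}. \<mu>2 t) = (\<lambda>s2'. \<Sum>t\<in>{t\<in>S1. fst (snd t) = Some s2'}. \<mu>1 t)"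
    by (rule ext, rule marg) (simp add: hmap_def)
  have C1: "c \<in> insert None (Some ` Bset N1 N2 s1' s2') \<and>
            ((succ2 N1 N2 x y s1' = {} \<and> s2' = None \<and> k' = 1) \<or> s2' \<in> Some ` succ2 N1 N2 x y s1')"
    if pos: "\<mu>2 (s1', s2', c, k') > 0" for s1' s2' c k'
  proof -
    obtain z where z: "z \<in> S1" "\<mu>1 z > 0" "hmap g z = (s1', s2', c, k')" using mu2_pos[OF pos] by blast
    obtain kz where zz: "z = (s1', s2', c, kz)" using z(3) by (cases z) (auto split: if_splits)
    show ?thesis using m(2)[of s1' s2' c kz] z zz by (auto split: if_splits)
  qed
  have C3: "(\<exists>s1' c. \<mu>2 (s1', None, c, 1) > 0)
          \<or> (\<lambda>s2'. \<Sum>t\<in>{t\<in>S2. fst (snd t) = Some s2'}. \<mu>2 t) \<notin> Sat N2 q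
          \<or> (b \<noteq> 1 \<and> (\<exists>s1' s2' c k'. \<mu>2 (s1', Some s2', Some c, k') > 0 \<and> k' < b))"
    using m(4)
  proof (elim disjE exE conjE)
    fix s1' c assume "\<mu>1 (s1', None, c, 1) > 0"
    then have "\<mu>2 (s1', None, c, 1) > 0" using mu2_ge[of "(s1', None, c, 1)"] sup by fastforce
    then show ?thesis by blast
  next
    assume "(\<lambda>s2'. \<Sum>t\<in>{t\<in>S1. fst (snd t) = Some s2'}. \<mu>1 t) \<notin> Sat N2 q"
    then show ?thesis using M2 by simp
  next
    fix s1' s2' c k' assume h: "a \<noteq> 1" "\<mu>1 (s1', Some s2', Some c, k') > 0" "k' < a"
    have "\<mu>2 (s1', Some s2', Some c, g k') > 0" using mu2_ge[of "(s1', Some s2', Some c, k')"] sup[OF h(2)] h(2) by fastforce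
    moreover have "b \<noteq> 1 \<and> g k' < b" using g3[of k'] sup[OF h(2)] h by auto
    ultimately show ?thesis by blast
  qed
  have "\<mu>2 \<in> Sat (diff_gen N1 N2 S2 I2) (DB x y p q b)"
    using distr2 C1 M1 m(3) C3 by (simp add: diff_gen_def diff_sat_def)
  moreover have "corr_by (St (diff_gen N1 N2 S1 I1)) (St (diff_gen N1 N2 S2 I2))
     (St (diff_gen N1 N2 S1 I1) \<times> St (diff_gen N1 N2 S2 I2)) \<mu>1 \<mu>2 \<delta>"
    using corr2 by (simp add: diff_gen_def)
  moreover have "(\<Sum>(x, y)\<in>St (diff_gen N1 N2 S1 I1) \<times> St (diff_gen N1 N2 S2 I2). ennreal (\<mu>1 x * \<delta> x y) * D x y) \<le> B"
    using cost[of D B] Dc by (simp add: diff_gen_def)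
  ultimately show "\<exists>\<mu>2 \<delta>. \<mu>2 \<in> Sat (diff_gen N1 N2 S2 I2) (DB x y p q b) \<and>
      corr_by (St (diff_gen N1 N2 S1 I1)) (St (diff_gen N1 N2 S2 I2)) (St (diff_gen N1 N2 S1 I1) \<times> St (diff_gen N1 N2 S2 I2)) \<mu>1 \<mu>2 \<delta> \<and>
      (\<Sum>(x, y)\<in>St (diff_gen N1 N2 S1 I1) \<times> St (diff_gen N1 N2 S2 I2). ennreal (\<mu>1 x * \<delta> x y) * D x y) \<le> B"
    by blast
qed



definition Dk :: "real \<Rightarrow> nat \<Rightarrow> ('s1,'s2,'a) dstate set \<Rightarrow> ('s1,'s2,'a) dstate set
   \<Rightarrow> ('s1,'s2,'a) dstate \<Rightarrow> ('s1,'s2,'a) dstate \<Rightarrow> ennreal" where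
  "Dk lam K1 S1 S2 t t' = (if t \<in> S1 \<and> t' \<in> S2 \<and> fst t = fst t' \<and> fst (snd t) = fst (snd t')
     \<and> fst (snd (snd t)) = fst (snd (snd t')) \<and> snd (snd (snd t')) \<le> snd (snd (snd t))
   then (if fst (snd t) = None \<or> fst (snd (snd t)) = None then 0
         else if snd (snd (snd t)) = snd (snd (snd t')) then ennreal (lam ^ Suc K1)
         else ennreal (lam ^ snd (snd (snd t'))))
   else 1)"

lemma Dk_simp: "Dk lam K1 S1 S2 (s, s2o, c, k) (s', s2o', c', k') =
   (if (s, s2o, c, k) \<in> S1 \<and> (s', s2o', c', k') \<in> S2 \<and> s = s' \<and> s2o = s2o' \<and> c = c' \<and> k' \<le> k
   then (if s2o = None \<or> c = None then 0
         else if k = k' then ennreal (lam ^ Suc K1) else ennreal (lam ^ k'))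
   else 1)"
  by (simp only: Dk_def fst_conv snd_conv)

lemma pow_le: "0 \<le> lam \<Longrightarrow> lam \<le> 1 \<Longrightarrow> m \<le> n \<Longrightarrow> ennreal (lam ^ n) \<le> ennreal (lam ^ m)"
  by (simp add: power_decreasing)

lemma ennreal_lam_pow: "0 \<le> lam \<Longrightarrow> ennreal lam * ennreal (lam ^ n) = ennreal (lam ^ Suc n)"
  by (simp add: ennreal_mult[symmetric])

context
  fixes N1 :: "('s1, 'a, 'p, 'c1) apa" and N2 :: "('s2, 'a, 'p, 'c2) apa" and K1 K2 :: nat and lam :: real
    and I1 I2 :: "('s1,'s2,'a) dstate set"
  assumes fin: "finite (St N1)" "finite (St N2)" "finite (Act N1)"
    and K: "1 \<le> K1" "K1 \<le> K2" and lam: "0 < lam" "lam < 1"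
begin

abbreviation "SS1 \<equiv> diff_states N1 N2 K2"
abbreviation "SS2 \<equiv> diff_states N1 N2 K1"
abbreviation "MM1 \<equiv> diff_gen N1 N2 SS1 I1"
abbreviation "MM2 \<equiv> diff_gen N1 N2 SS2 I2"
abbreviation "DD \<equiv> Dk lam K1 SS1 SS2"

lemma finS: "finite SS1" "finite SS2" using fin unfolding diff_states_def by auto

lemma DBot_bound: "ennreal lam * Dcon MM1 MM2 (DBot \<phi>) (DBot \<phi>) DD \<le> B"
proof -
  have "Dcon MM1 MM2 (DBot \<phi>) (DBot \<phi>) DD \<le> 0"
    by (rule P1[OF finS]) (use K in \<open>auto simp: diff_states_def Dk_simp\<close>)
  then show ?thesis by simp
qed

lemma hm_in: "x \<in> SS1 \<Longrightarrow> (\<And>k. 1 \<le> k \<Longrightarrow> k \<le> K2 \<Longrightarrow> 1 \<le> g k \<and> g k \<le> K1) \<Longrightarrow> hmap g x \<in> SS2"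
  using K by (cases x) (auto simp: diff_states_def)

lemma DB_bound_eq:
  assumes "a \<le> K1"
  shows "ennreal lam * Dcon MM1 MM2 (DB x y p q a) (DB x y p q a) DD \<le> ennreal (lam ^ Suc K1)"
proof -
  let ?g = "\<lambda>k. min k K1"
  have gr: "1 \<le> ?g k \<and> ?g k \<le> K1" if "1 \<le> k" "k \<le> K2" for k using that K by auto
  have "Dcon MM1 MM2 (DB x y p q a) (DB x y p q a) DD \<le> ennreal (lam ^ K1)"
  proof (rule P2[OF fin refl refl, where g = ?g])
    fix z assume z: "z \<in> SS1"
    have zz: "hmap ?g z \<in> SS2" by (rule hm_in[OF z gr])
    obtain s s2o c k where zd: "z = (s, s2o, c, k)" by (cases z)
    have "k \<ge> 1" using z zd by (auto simp: diff_states_def)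
    then show "DD z (hmap ?g z) \<le> ennreal (lam ^ K1)"
      using z zz zd lam pow_le[of lam K1 "Suc K1"] by (auto simp: Dk_simp)
  qed (use assms K in auto)
  then have "ennreal lam * Dcon MM1 MM2 (DB x y p q a) (DB x y p q a) DD \<le> ennreal lam * ennreal (lam ^ K1)"
    by (rule mult_left_mono) simp
  then show ?thesis using ennreal_lam_pow[of lam K1] lam by simp
qed

lemma DB_bound_lt:
  assumes "2 \<le> b" "b \<le> K1" "b < a"
  shows "ennreal lam * Dcon MM1 MM2 (DB x y p q a) (DB x y p q b) DD \<le> ennreal (lam ^ b)"
proof -
  let ?g = "\<lambda>k. min k (b - 1)"
  have gr: "1 \<le> ?g k \<and> ?g k \<le> K1" if "1 \<le> k" "k \<le> K2" for k using that K assms by auto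
  have "Dcon MM1 MM2 (DB x y p q a) (DB x y p q b) DD \<le> ennreal (lam ^ (b - 1))"
  proof (rule P2[OF fin refl refl, where g = ?g])
    fix z assume z: "z \<in> SS1"
    have zz: "hmap ?g z \<in> SS2" by (rule hm_in[OF z gr])
    obtain s s2o c k where zd: "z = (s, s2o, c, k)" by (cases z)
    have "k \<ge> 1" using z zd by (auto simp: diff_states_def)
    moreover have "ennreal (lam ^ Suc K1) \<le> ennreal (lam ^ (b - 1))" using lam assms by (intro pow_le) auto
    ultimately show "DD z (hmap ?g z) \<le> ennreal (lam ^ (b - 1))"
      using z zz zd lam by (auto simp: Dk_simp min_def)
  qed (use assms K in auto)
  then have "ennreal lam * Dcon MM1 MM2 (DB x y p q a) (DB x y p q b) DD \<le> ennreal lam * ennreal (lam ^ (b - 1))"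
    by (rule mult_left_mono) simp
  then show ?thesis using ennreal_lam_pow[of lam "b - 1"] lam assms by simp
qed

lemma lam_D1: "ennreal lam * Dcon MM1 MM2 \<phi>1 \<phi>2 DD \<le> ennreal (lam ^ 1)"
proof -
  have "ennreal lam * Dcon MM1 MM2 \<phi>1 \<phi>2 DD \<le> ennreal lam * 1"
    by (rule mult_left_mono) (simp_all add: Dcon_le1)
  then show ?thesis by simp
qed

lemma DB_bound:
  assumes t: "(s, Some s2, Some e, a) \<in> SS1" "(s, Some s2, Some e, b) \<in> SS2" "b \<le> a"
  shows "ennreal lam * Dcon MM1 MM2 (DB x y p q a) (DB x y p q b) DD \<le> DD (s, Some s2, Some e, a) (s, Some s2, Some e, b)"
proof -
  have b: "1 \<le> b" "b \<le> K1" using t(2) by (auto simp: diff_states_def)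
  show ?thesis
  proof (cases "a = b")
    case True then show ?thesis using DB_bound_eq[of a] b t by (simp add: Dk_simp)
  next
    case False
    show ?thesis
    proof (cases "b = 1")
      case True then show ?thesis using lam_D1 False t by (simp add: Dk_simp)
    next
      case False2: False
      then show ?thesis using DB_bound_lt[of b a] b t False by (simp add: Dk_simp)
    qed
  qed
qed

lemma fixp: "dist_op lam MM1 MM2 DD \<le> DD"
proof (rule le_funI, rule le_funI)
  fix t t'
  show "dist_op lam MM1 MM2 DD t t' \<le> DD t t'"
  proof (cases "DD t t' = 1")
    case True then show ?thesis using dist_op_le1[of lam] lam by simp
  next
    case False
    obtain s s2o eo a where td: "t = (s, s2o, eo, a)" by (cases t)
    obtain s' s2o' eo' b where td': "t' = (s', s2o', eo', b)" by (cases t')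
    from False have m: "t \<in> SS1" "t' \<in> SS2" "s' = s" "s2o' = s2o" "eo' = eo" "b \<le> a"
      unfolding td td' Dk_simp by (auto split: if_splits)
    note ts = m(1)[unfolded td] m(2)[unfolded td' m(3,4,5)]
    show ?thesis unfolding td td' m(3,4,5)
    proof (rule dist_op_leI)
      show "Val MM1 (s, s2o, eo, a) = Val MM2 (s, s2o, eo, b)" by (simp add: diff_gen_def)
    next
      fix act \<phi>1 assume L: "Lab MM1 (s, s2o, eo, a) act \<phi>1 \<noteq> No"
      show "\<exists>\<phi>2. Lab MM2 (s, s2o, eo, b) act \<phi>2 \<noteq> No \<and>
                ennreal lam * Dcon MM1 MM2 \<phi>1 \<phi>2 DD \<le> DD (s, s2o, eo, a) (s, s2o, eo, b)"
      proof (cases \<phi>1)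
        case (DBot \<phi>)
        then show ?thesis using L L1[OF ts, of N1 N2 act \<phi>] DBot_bound by (auto simp: diff_gen_def)
      next
        case (DB x y p q k)
        then have e: "s2o = Some x" "eo = Some y" "k = a" using L4[of N1 N2 SS1] L by (auto simp: diff_gen_def)
        show ?thesis
          using L L2[OF ts, of N1 N2 act x y p q] DB_bound[of s x y a b] ts e DB m(6)
          by (auto simp: diff_gen_def intro!: exI[of _ "DB x y p q b"])
      qed
    next
      fix act \<phi>2 assume L: "Lab MM2 (s, s2o, eo, b) act \<phi>2 = Must"
      show "\<exists>\<phi>1. Lab MM1 (s, s2o, eo, a) act \<phi>1 = Must \<and>
                ennreal lam * Dcon MM1 MM2 \<phi>1 \<phi>2 DD \<le> DD (s, s2o, eo, a) (s, s2o, eo, b)"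
      proof (cases \<phi>2)
        case (DBot \<phi>)
        then show ?thesis using L L1[OF ts, of N1 N2 act \<phi>] DBot_bound by (auto simp: diff_gen_def)
      next
        case (DB x y p q k)
        then have e: "s2o = Some x" "eo = Some y" "k = b" using L4[of N1 N2 SS2 s s2o eo b act x y p q k] L by (auto simp: diff_gen_def)
        show ?thesis
          using L L2[OF ts, of N1 N2 act x y p q] DB_bound[of s x y a b] ts e DB m(6)
          by (auto simp: diff_gen_def intro!: exI[of _ "DB x y p q a"])
      qed
    qed
  qed
qed

lemma sd_le: "state_dist lam MM1 MM2 t t' \<le> DD t t'"
proof -
  have "lfp (dist_op lam MM1 MM2) \<le> DD" using fixp by (rule lfp_lowerbound)
  then show ?thesis unfolding state_dist_def le_fun_def by blast
qed

end




definition D0 :: "('s1,'s2,'a) dstate set \<Rightarrow> ('s1,'s2,'a) dstate \<Rightarrow> ('s1,'s2,'a) dstate \<Rightarrow> ennreal" where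
  "D0 S t t' = (if t = t' \<and> t \<in> S then 0 else 1)"

lemma fixp0:
  fixes N1 :: "('s1, 'a, 'p, 'c1) apa" and N2 :: "('s2, 'a, 'p, 'c2) apa" and I :: "('s1,'s2,'a) dstate set"
  assumes fin: "finite (St N1)" and lam: "0 \<le> lam" "lam \<le> 1"
  defines "S0 \<equiv> St N1 \<times> {None} \<times> {None} \<times> {1::nat}"
  shows "dist_op lam (diff_gen N1 N2 S0 I) (diff_gen N1 N2 S0 I) (D0 S0) \<le> D0 S0"
proof (rule le_funI, rule le_funI)
  fix t t'
  show "dist_op lam (diff_gen N1 N2 S0 I) (diff_gen N1 N2 S0 I) (D0 S0) t t' \<le> D0 S0 t t'"
  proof (cases "t = t' \<and> t \<in> S0")
    case False then have e: "D0 S0 t t' = 1" unfolding D0_def by (simp only: if_False)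
    have "dist_op lam (diff_gen N1 N2 S0 I) (diff_gen N1 N2 S0 I) (D0 S0) t t' \<le> 1" by (rule dist_op_le1[OF lam])
    then show ?thesis unfolding e .
  next
    case True
    then have tt: "t' = t" and tS: "t \<in> S0" by auto
    obtain s where td: "t = (s, None, None, 1)" "s \<in> St N1" using tS unfolding S0_def by blast
    have fS: "finite S0" using fin by (simp add: S0_def)
    have P: "ennreal lam * Dcon (diff_gen N1 N2 S0 I) (diff_gen N1 N2 S0 I) (DBot \<phi>) (DBot \<phi>) (D0 S0) \<le> 0" for \<phi>
    proof -
      have "Dcon (diff_gen N1 N2 S0 I) (diff_gen N1 N2 S0 I) (DBot \<phi>) (DBot \<phi>) (D0 S0) \<le> 0"
        by (rule P1[OF fS fS]) (auto simp: S0_def D0_def)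
      then show ?thesis by simp
    qed
    have "dist_op lam (diff_gen N1 N2 S0 I) (diff_gen N1 N2 S0 I) (D0 S0) t t \<le> 0"
    proof (rule dist_op_leI)
      fix act \<phi>1 assume L: "Lab (diff_gen N1 N2 S0 I) t act \<phi>1 \<noteq> No"
      then show "\<exists>\<phi>2. Lab (diff_gen N1 N2 S0 I) t act \<phi>2 \<noteq> No \<and>
          ennreal lam * Dcon (diff_gen N1 N2 S0 I) (diff_gen N1 N2 S0 I) \<phi>1 \<phi>2 (D0 S0) \<le> 0"
      proof (cases \<phi>1)
        case (DB x y p q k) then show ?thesis using L L4[of N1 N2 S0 s None None 1 act x y p q k] td(1)
          by (simp add: diff_gen_def)
      next
        case (DBot \<phi>) then show ?thesis using L P[of \<phi>] by blast
      qed
    next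
      fix act \<phi>2 assume L: "Lab (diff_gen N1 N2 S0 I) t act \<phi>2 = Must"
      then show "\<exists>\<phi>1. Lab (diff_gen N1 N2 S0 I) t act \<phi>1 = Must \<and>
          ennreal lam * Dcon (diff_gen N1 N2 S0 I) (diff_gen N1 N2 S0 I) \<phi>1 \<phi>2 (D0 S0) \<le> 0"
      proof (cases \<phi>2)
        case (DB x y p q k) then show ?thesis using L L4[of N1 N2 S0 s None None 1 act x y p q k] td(1)
          by (simp add: diff_gen_def)
      next
        case (DBot \<phi>) then show ?thesis using L P[of \<phi>] by blast
      qed
    qed (simp add: diff_gen_def)
    moreover have "D0 S0 t t' = 0" using tt tS unfolding D0_def by simp
    ultimately show ?thesis using tt by simp
  qed
qed



lemma Bset_act:
  assumes "wf_apa N1" "wf_apa N2" "Act N1 = Act N2" "f \<in> Bset N1 N2 s1 (Some s2)"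
  shows "f \<in> Act N1"
proof -
  have "(\<exists>\<phi>. Lab N1 s1 f \<phi> \<noteq> No) \<or> (\<exists>\<phi>. Lab N2 s2 f \<phi> \<noteq> No)"
  proof -
    have "f \<in> Ba N1 N2 s1 s2 \<union> Bb N1 N2 s1 s2 \<union> Bc N1 N2 s1 s2 \<union> Bd N1 N2 s1 s2 \<union> Be N1 N2 s1 s2 \<union> Bf N1 N2 s1 s2"
      using assms(4) by (simp add: Bset_def)
    then show ?thesis
    proof (elim UnE)
      assume "f \<in> Ba N1 N2 s1 s2" then obtain \<phi> where "Lab N1 s1 f \<phi> = Must" unfolding Ba_def by blast
      then show ?thesis by (intro disjI1 exI[of _ \<phi>]) simp
    next
      assume "f \<in> Bb N1 N2 s1 s2" then obtain \<phi> where "Lab N1 s1 f \<phi> = May" unfolding Bb_def by blast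
      then show ?thesis by (intro disjI1 exI[of _ \<phi>]) simp
    next
      assume "f \<in> Bc N1 N2 s1 s2" then obtain \<phi> where "Lab N1 s1 f \<phi> \<noteq> No" unfolding Bc_def by blast
      then show ?thesis by blast
    next
      assume "f \<in> Bd N1 N2 s1 s2" then obtain \<phi> where "Lab N2 s2 f \<phi> = Must" unfolding Bd_def by blast
      then show ?thesis by (intro disjI2 exI[of _ \<phi>]) simp
    next
      assume "f \<in> Be N1 N2 s1 s2" then obtain \<phi> where "Lab N2 s2 f \<phi> = Must" unfolding Be_def by blast
      then show ?thesis by (intro disjI2 exI[of _ \<phi>]) simp
    next
      assume "f \<in> Bf N1 N2 s1 s2" then obtain \<phi> where "Lab N1 s1 f \<phi> = Must" unfolding Bf_def by blast
      then show ?thesis by (intro disjI1 exI[of _ \<phi>]) simp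
    qed
  qed
  moreover have "Lab N1 s1 f \<phi> \<noteq> No \<Longrightarrow> f \<in> Act N1" for \<phi>
    using assms(1) unfolding wf_apa_def by (metis (no_types, lifting))
  moreover have "Lab N2 s2 f \<phi> \<noteq> No \<Longrightarrow> f \<in> Act N2" for \<phi>
    using assms(2) unfolding wf_apa_def by (metis (no_types, lifting))
  ultimately show ?thesis using assms(3) by blast
qed


theorem lemma4p6:
  fixes N1 :: "('s1, 'a, 'p, 'c1) apa" and N2 :: "('s2, 'a, 'p, 'c2) apa"
    and s01 :: 's1 and s02 :: 's2 and lam :: real and K1 K2 :: nat
  assumes "wf_apa N1" and "wf_apa N2"
    and "Act N1 = Act N2" and "APs N1 = APs N2"
    and "Init N1 = {s01}" and "Init N2 = {s02}"
    and "deterministic N1" and "deterministic N2"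
    and "svnf N1" and "svnf N2"
    and "\<not> refines N1 N2"
    and "0 < lam" and "lam < 1"
    and "1 \<le> K1" and "K1 \<le> K2"
  shows "apa_dist lam (apa_diff N1 N2 K2) (apa_diff N1 N2 K1) \<le> ennreal (lam ^ K1)"
proof -
  note wf1 = assms(1)[unfolded wf_apa_def] and wf2 = assms(2)[unfolded wf_apa_def]
  have fin: "finite (St N1)" "finite (St N2)" "finite (Act N1)" using wf1 wf2 by auto
  have s0: "s01 \<in> St N1" "s02 \<in> St N2" using wf1 wf2 assms(5,6) by auto
  have te: "the_elem (Init N1) = s01" "the_elem (Init N2) = s02" using assms(5,6) by auto
  have lam: "0 \<le> lam" "lam \<le> 1" using assms(12,13) by auto
  show ?thesis
  proof (cases "Val N1 s01 \<noteq> Val N2 s02")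
    case True
    define S0 :: "('s1,'s2,'a) dstate set" where "S0 = St N1 \<times> {None} \<times> {None} \<times> {1::nat}"
    define M where "M = diff_gen N1 N2 S0 {(s01, None, None, 1)}"
    have eq: "apa_diff N1 N2 K = M" for K unfolding apa_diff_def Let_def te M_def S0_def using True by simp
    have "lfp (dist_op lam M M) \<le> D0 S0" unfolding M_def S0_def using fixp0[OF fin(1) lam] by (rule lfp_lowerbound)
    then have "state_dist lam M M (s01, None, None, 1) (s01, None, None, 1) \<le> D0 S0 (s01, None, None, 1) (s01, None, None, 1)"
      unfolding state_dist_def le_fun_def by blast
    also have "\<dots> = 0" using s0 by (simp add: D0_def S0_def)
    finally have "state_dist lam M M (s01, None, None, 1) (s01, None, None, 1) \<le> 0" .
    then show ?thesis unfolding eq apa_dist_def by (simp add: M_def diff_gen_def)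
  next
    case False
    then have eq: "apa_diff N1 N2 K = diff_gen N1 N2 (diff_states N1 N2 K)
            {(s01, Some s02, Some f, K) | f. f \<in> Bset N1 N2 s01 (Some s02)}" for K
      unfolding apa_diff_def Let_def te by simp
    show ?thesis unfolding apa_dist_def
    proof (rule SUP_least)
      fix t assume "t \<in> Init (apa_diff N1 N2 K2)"
      then obtain f where f: "f \<in> Bset N1 N2 s01 (Some s02)" "t = (s01, Some s02, Some f, K2)"
        unfolding eq by (auto simp: diff_gen_def)
      have fA: "f \<in> Act N1" by (rule Bset_act[OF assms(1,2,3) f(1)])
      let ?t' = "(s01, Some s02, Some f, K1)"
      have t'I: "?t' \<in> Init (apa_diff N1 N2 K1)" unfolding eq using f by (auto simp: diff_gen_def)
      have tS: "t \<in> diff_states N1 N2 K2" "?t' \<in> diff_states N1 N2 K1"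
        using f s0 fA assms(14,15) by (auto simp: diff_states_def)
      have "state_dist lam (apa_diff N1 N2 K2) (apa_diff N1 N2 K1) t ?t'
          \<le> Dk lam K1 (diff_states N1 N2 K2) (diff_states N1 N2 K1) t ?t'"
        unfolding eq by (rule sd_le[OF fin assms(14,15,12,13)])
      also have "\<dots> \<le> ennreal (lam ^ K1)"
        using tS f(2) assms(15) lam pow_le[of lam K1 "Suc K1"] by (auto simp: Dk_simp)
      finally show "(INF s'\<in>Init (apa_diff N1 N2 K1). state_dist lam (apa_diff N1 N2 K2) (apa_diff N1 N2 K1) t s')
          \<le> ennreal (lam ^ K1)" using t'I by (intro INF_lower2) auto
    qed
  qed
qed


end
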